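(* Let $r\ge1$, let $G=(V,A)$ be a weakly connected directed graph with distinct nodes $s,t$. Then the function $\mathbb{R}_{\ge0}^A\to\mathbb{R}\cup\{\infty\}$, $y\mapsto R^y_{s,t}$, is convex.
   Context: Fix $r\ge1$. For $y\in\mathbb{R}_{\ge 0}^A$ let $\operatorname{supp}(y)=\{a\in A: y_a>0\}$, let $G'=(V,\operatorname{supp}(y))$ with node-arc incidence matrix $\Gamma'$ (entry $+1$ if the arc leaves the node, $-1$ if it enters, $0$ otherwise). Define $R^y_{s,t}=\min\{\sum_{a\in\operatorname{supp}(y)} |f_a|^{r+1}/y_a^{r} : f\in\mathbb{R}^{\operatorname{supp}(y)},\ \Gamma' f=\mathbf{1}_s-\mathbf{1}_t\}$, with $R^y_{s,t}=\infty$ if $s$ and $t$ are not connected in $G'$. *)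

theory Defs
  imports "HOL-Analysis.Analysis" "Graph_Theory.Digraph_Component"
begin

definition supp_arcs :: "('v,'e) pre_digraph \<Rightarrow> ('e \<Rightarrow> real) \<Rightarrow> 'e set" where
  "supp_arcs G y = {a \<in> arcs G. y a > 0}"

definition incidence :: "('v,'e) pre_digraph \<Rightarrow> 'v \<Rightarrow> 'e \<Rightarrow> real" where
  "incidence G v a = (if tail G a = v then 1 else 0) - (if head G a = v then 1 else 0)"

definition is_st_flow :: "('v,'e) pre_digraph \<Rightarrow> ('e \<Rightarrow> real) \<Rightarrow> 'v \<Rightarrow> 'v \<Rightarrow> ('e \<Rightarrow> real) \<Rightarrow> bool" where
  "is_st_flow G y s t f \<longleftrightarrow>
     (\<forall>a. a \<notin> supp_arcs G y \<longrightarrow> f a = 0) \<and>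
     (\<forall>v \<in> verts G. (\<Sum>a \<in> supp_arcs G y. incidence G v a * f a) =
        (if v = s then 1 else 0) - (if v = t then 1 else 0))"

text \<open>R^y_{s,t}: minimum (written as infimum, which equals the minimum whenever the
  feasible set is nonempty) of the r-energy over unit s-t flows on supp y; the infimum
  of the empty set is \<infinity>, matching the convention R = \<infinity> when s,t are disconnected.\<close>
definition eff_resistance :: "real \<Rightarrow> ('v,'e) pre_digraph \<Rightarrow> 'v \<Rightarrow> 'v \<Rightarrow> ('e \<Rightarrow> real) \<Rightarrow> ereal" where
  "eff_resistance r G s t y =
     Inf {ereal (\<Sum>a \<in> supp_arcs G y. \<bar>f a\<bar> powr (r + 1) / (y a) powr r) | f. is_st_flow G y s t f}"

end

theory Submission
  imports Defs
begin

lemma powconv: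
  fixes a b l p :: real
  assumes "0 \<le> a" "0 \<le> b" "0 \<le> l" "l \<le> 1" "p \<ge> 1"
  shows "(l*a+(1-l)*b) powr p \<le> l * a powr p + (1-l) * b powr p"
proof (cases "a = 0 \<or> b = 0")
  case True
  have m: "m powr p \<le> m" if "0 \<le> m" "m \<le> 1" for m :: real
  proof (cases "m = 0")
    case False
    then have "m powr p \<le> m powr 1" using that assms(5)
      by (intro powr_mono') auto
    then show ?thesis using that by simp
  qed simp
  show ?thesis
  proof (cases "a = 0")
    case True
    have "(l*a+(1-l)*b) powr p = (1-l) powr p * b powr p"
      using True assms by (simp add: powr_mult)
    also have "\<dots> \<le> (1-l) * b powr p" using m[of "1-l"] assms by (intro mult_right_mono) auto
    finally show ?thesis using True assms by simp
  next
    case False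
    then have b0: "b = 0" using \<open>a = 0 \<or> b = 0\<close> by auto
    have "(l*a+(1-l)*b) powr p = l powr p * a powr p"
      using b0 assms by (simp add: powr_mult)
    also have "\<dots> \<le> l * a powr p" using m[of "l"] assms by (intro mult_right_mono) auto
    finally show ?thesis using b0 assms by simp
  qed
next
  case False
  then have "a > 0" "b > 0" using assms by auto
  then show ?thesis using convex_onD[OF powr_convex[OF assms(5)], of "1-l" a b] assms by auto
qed

lemma sc: fixes k f w r :: real assumes "k > 0" "w > 0" "r > 0"
  shows "\<bar>k*f\<bar> powr (r+1) / (k*w) powr r = k * (\<bar>f\<bar> powr (r+1) / w powr r)"
  proof -
    have "\<bar>k*f\<bar> powr (r+1) = k powr r * k * \<bar>f\<bar> powr (r+1)"
      using assms by (simp add: abs_mult powr_mult powr_add)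
    moreover have "(k*w) powr r = k powr r * w powr r" using assms by (simp add: powr_mult)
    ultimately show ?thesis using assms by simp
  qed

lemma b1: fixes r c y1 y2 f1 f2 :: real
  assumes "r>0" "y2 > 0" "0<c" "c<1"
  shows "\<bar>c*0 + (1-c)*f2\<bar> powr (r+1) / (c*0 + (1-c)*y2) powr r
     \<le> c * (\<bar>0\<bar> powr (r+1) / 0 powr r) + (1-c) * (\<bar>f2\<bar> powr (r+1) / y2 powr r)"
  using sc[of "1-c" y2 r f2] assms by simp
lemma b2: fixes r c y1 y2 f1 f2 :: real
  assumes "r>0" "y1 > 0" "0<c" "c<1"
  shows "\<bar>c*f1 + (1-c)*0\<bar> powr (r+1) / (c*y1 + (1-c)*0) powr r
     \<le> c * (\<bar>f1\<bar> powr (r+1) / y1 powr r) + (1-c) * (\<bar>0\<bar> powr (r+1) / 0 powr r)"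
  using sc[of "c" y1 r f1] assms by simp

lemma main_branch:
  fixes r c y1 y2 f1 f2 :: real
  assumes r: "r > 0" and p1: "y1 > 0" "y2 > 0" and c: "0 < c" "c < 1"
  shows "\<bar>c*f1 + (1-c)*f2\<bar> powr (r+1) / (c*y1 + (1-c)*y2) powr r
     \<le> c * (\<bar>f1\<bar> powr (r+1) / y1 powr r) + (1-c) * (\<bar>f2\<bar> powr (r+1) / y2 powr r)"
proof -
  define Yv where "Yv = c*y1 + (1-c)*y2"
  define l where "l = c*y1/Yv"
  have Yp: "Yv > 0" using p1 c unfolding Yv_def by (simp add: add_pos_pos)
  have l0: "0 \<le> l" using p1 c Yp unfolding l_def by simp
  have l1: "l \<le> 1" using p1 c Yp unfolding l_def Yv_def by (simp add: divide_le_eq_1)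
  have ml: "1 - l = (1-c)*y2/Yv" using Yp unfolding l_def Yv_def by (simp add: diff_divide_eq_iff)
  have A: "l*(\<bar>f1\<bar>/y1) = c*\<bar>f1\<bar>/Yv" unfolding l_def using p1 by simp
  have B: "(1-l)*(\<bar>f2\<bar>/y2) = (1-c)*\<bar>f2\<bar>/Yv" unfolding ml using p1 by simp
  have AB: "l*(\<bar>f1\<bar>/y1) + (1-l)*(\<bar>f2\<bar>/y2) = (c*\<bar>f1\<bar> + (1-c)*\<bar>f2\<bar>)/Yv"
    unfolding A B by (simp add: add_divide_distrib)
  have t0: "\<bar>c*f1 + (1-c)*f2\<bar> \<le> c*\<bar>f1\<bar> + (1-c)*\<bar>f2\<bar>"
  proof -
    have "\<bar>c*f1 + (1-c)*f2\<bar> \<le> \<bar>c*f1\<bar> + \<bar>(1-c)*f2\<bar>" by (rule abs_triangle_ineq)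
    also have "\<dots> = c*\<bar>f1\<bar> + (1-c)*\<bar>f2\<bar>" using c by (simp add: abs_mult)
    finally show ?thesis .
  qed
  have tri: "\<bar>c*f1 + (1-c)*f2\<bar>/Yv \<le> l*(\<bar>f1\<bar>/y1) + (1-l)*(\<bar>f2\<bar>/y2)"
    unfolding AB using Yp t0 by (intro divide_right_mono) auto
  have "(\<bar>c*f1 + (1-c)*f2\<bar>/Yv) powr (r+1) \<le> (l*(\<bar>f1\<bar>/y1) + (1-l)*(\<bar>f2\<bar>/y2)) powr (r+1)"
    using tri r Yp by (intro powr_mono2) auto
  also have "\<dots> \<le> l*(\<bar>f1\<bar>/y1) powr (r+1) + (1-l)*(\<bar>f2\<bar>/y2) powr (r+1)"
    using l0 l1 p1 r by (intro powconv) auto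
  finally have ineq: "(\<bar>c*f1 + (1-c)*f2\<bar>/Yv) powr (r+1) \<le> l*(\<bar>f1\<bar>/y1) powr (r+1) + (1-l)*(\<bar>f2\<bar>/y2) powr (r+1)" .
  have e: "w * (\<bar>f\<bar>/w) powr (r+1) = \<bar>f\<bar> powr (r+1) / w powr r" if "w > 0" for w f :: real
    using that by (simp add: powr_divide powr_add)
  have "\<bar>c*f1 + (1-c)*f2\<bar> powr (r+1) / Yv powr r = Yv * (\<bar>c*f1 + (1-c)*f2\<bar>/Yv) powr (r+1)"
    using e[OF Yp] by simp
  also have "\<dots> \<le> Yv * (l*(\<bar>f1\<bar>/y1) powr (r+1) + (1-l)*(\<bar>f2\<bar>/y2) powr (r+1))"
    using ineq Yp by (intro mult_left_mono) auto
  also have "\<dots> = (Yv*l) * (\<bar>f1\<bar>/y1) powr (r+1) + (Yv*(1-l)) * (\<bar>f2\<bar>/y2) powr (r+1)"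
    by (simp only: distrib_left mult.assoc)
  also have "Yv*l = c*y1" unfolding l_def using Yp by simp
  also have "Yv*(1-l) = (1-c)*y2" unfolding ml using Yp by simp
  also have "c*y1 * (\<bar>f1\<bar>/y1) powr (r+1) + (1-c)*y2 * (\<bar>f2\<bar>/y2) powr (r+1)
     = c * (\<bar>f1\<bar> powr (r+1) / y1 powr r) + (1-c) * (\<bar>f2\<bar> powr (r+1) / y2 powr r)"
    using e[OF p1(1), of f1] e[OF p1(2), of f2] by (simp only: mult.assoc)
  finally show ?thesis unfolding Yv_def .
qed

lemma persp:
  fixes r c y1 y2 f1 f2 :: real
  assumes r: "r > 0" and y: "0 \<le> y1" "0 \<le> y2" and c: "0 < c" "c < 1"
    and z1: "y1 = 0 \<Longrightarrow> f1 = 0" and z2: "y2 = 0 \<Longrightarrow> f2 = 0"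
    and Y: "c*y1 + (1-c)*y2 > 0"
  shows "\<bar>c*f1 + (1-c)*f2\<bar> powr (r+1) / (c*y1 + (1-c)*y2) powr r
     \<le> c * (\<bar>f1\<bar> powr (r+1) / y1 powr r) + (1-c) * (\<bar>f2\<bar> powr (r+1) / y2 powr r)"
proof (cases "y1 = 0")
  case True
  then have "y2 > 0" using Y c y by (cases "y2 = 0") auto
  then show ?thesis using True z1 b1[of r y2 c f2] r c by simp
next
  case n1: False
  show ?thesis
  proof (cases "y2 = 0")
    case True
    then show ?thesis using n1 y z2 b2[of r y1 c f1] r c by simp
  next
    case False
    then show ?thesis using n1 y r c main_branch[of r y1 y2 c f1 f2] by simp
  qed
qed

lemma pos_comb:
  fixes a b c :: real
  assumes "0 \<le> a" "0 \<le> b" "0 < c" "c < 1"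
  shows "(0 < c*a+(1-c)*b) \<longleftrightarrow> (0 < a \<or> 0 < b)"
proof
  assume "0 < c*a+(1-c)*b"
  then show "0 < a \<or> 0 < b" using assms by (cases "a = 0"; cases "b = 0") auto
next
  assume "0 < a \<or> 0 < b"
  then show "0 < c*a+(1-c)*b" using assms
    by (metis add_pos_nonneg add_nonneg_pos diff_gt_0_iff_gt mult_pos_pos mult_nonneg_nonneg less_imp_le)
qed

lemma combo:
  fixes L :: ereal and c :: real
  assumes c: "0 < c" "c < 1" and gp: "\<forall>x. P x \<longrightarrow> 0 \<le> g x" and hp: "\<forall>x. Q x \<longrightarrow> 0 \<le> h x"
    and H: "\<forall>x y. P x \<longrightarrow> Q y \<longrightarrow> L \<le> ereal (c*g x + (1-c)*h y)"
  shows "L \<le> ereal c * Inf {ereal (g x)|x. P x} + ereal (1-c) * Inf {ereal (h y)|y. Q y}"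
proof -
  have I1: "0 \<le> Inf {ereal (g x)|x. P x}" using gp by (auto intro!: Inf_greatest)
  have I2: "0 \<le> Inf {ereal (h y)|y. Q y}" using hp by (auto intro!: Inf_greatest)
  show ?thesis
  proof (cases "\<exists>x. P x")
    case False
    then have "{ereal (g x)|x. P x} = {}" by auto
    then have "ereal c * Inf {ereal (g x)|x. P x} = \<infinity>" using c by (simp add: top_ereal_def)
    moreover have "ereal (1-c) * Inf {ereal (h y)|y. Q y} \<noteq> -\<infinity>"
      using I2 c by (intro not_MInfty_nonneg) (simp add: ereal_zero_le_0_iff)
    ultimately have "ereal c * Inf {ereal (g x)|x. P x} + ereal (1-c) * Inf {ereal (h y)|y. Q y} = \<infinity>"
        by (cases "ereal (1-c) * Inf {ereal (h y)|y. Q y}") auto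
      then show ?thesis by (metis ereal_less_eq(1))
  next
    case True
    then obtain x0 where x0: "P x0" by auto
    show ?thesis
    proof (cases "\<exists>y. Q y")
      case False
      then have "{ereal (h y)|y. Q y} = {}" by auto
      then have "ereal (1-c) * Inf {ereal (h y)|y. Q y} = \<infinity>" using c by (simp add: top_ereal_def)
      moreover have "ereal c * Inf {ereal (g x)|x. P x} \<noteq> -\<infinity>"
        using I1 c by (intro not_MInfty_nonneg) (simp add: ereal_zero_le_0_iff)
      ultimately have "ereal c * Inf {ereal (g x)|x. P x} + ereal (1-c) * Inf {ereal (h y)|y. Q y} = \<infinity>"
        by (cases "ereal c * Inf {ereal (g x)|x. P x}") auto
      then show ?thesis by (metis ereal_less_eq(1))
    next
      case True
      then obtain y0 where y0: "Q y0" by auto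
      define A where "A = g ` Collect P"
      define B where "B = h ` Collect Q"
      have An: "A \<noteq> {}" "bdd_below A" using x0 gp unfolding A_def by (auto intro!: bdd_belowI[of _ 0])
      have Bn: "B \<noteq> {}" "bdd_below B" using y0 hp unfolding B_def by (auto intro!: bdd_belowI[of _ 0])
      have eA: "Inf {ereal (g x)|x. P x} = ereal (Inf A)"
      proof -
        have "{ereal (g x)|x. P x} = ereal ` A" unfolding A_def by auto
        then show ?thesis using ereal_Inf'[OF An(2) An(1)] by (simp add: image_comp)
      qed
      have eB: "Inf {ereal (h y)|y. Q y} = ereal (Inf B)"
      proof -
        have "{ereal (h y)|y. Q y} = ereal ` B" unfolding B_def by auto
        then show ?thesis using ereal_Inf'[OF Bn(2) Bn(1)] by (simp add: image_comp)
      qed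
      show ?thesis
      proof (cases L)
        case (real l)
        have hl: "l \<le> c*g x + (1-c)*h y" if "P x" "Q y" for x y using H that real by auto
        have s1: "(l - (1-c)*h y)/c \<le> Inf A" if "Q y" for y
        proof (rule cInf_greatest[OF An(1)])
          fix a assume "a \<in> A"
          then obtain x where "P x" "a = g x" unfolding A_def by auto
          then show "(l - (1-c)*h y)/c \<le> a" using hl[OF \<open>P x\<close> that] c
            by (simp add: pos_divide_le_eq mult.commute)
        qed
        have s2: "(l - c * Inf A)/(1-c) \<le> Inf B"
        proof (rule cInf_greatest[OF Bn(1)])
          fix b assume "b \<in> B"
          then obtain y where "Q y" "b = h y" unfolding B_def by auto
          then show "(l - c * Inf A)/(1-c) \<le> b" using s1[OF \<open>Q y\<close>] c
            by (simp add: pos_divide_le_eq divide_le_eq mult.commute)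
        qed
        have "l \<le> c * Inf A + (1-c) * Inf B" using s2 c
          by (simp add: pos_divide_le_eq mult.commute)
        then show ?thesis unfolding eA eB using real by simp
      next
        case PInf
        then show ?thesis using H x0 y0 by auto
      qed simp
    qed
  qed
qed

definition en :: "real \<Rightarrow> ('v,'e) pre_digraph \<Rightarrow> ('e \<Rightarrow> real) \<Rightarrow> ('e \<Rightarrow> real) \<Rightarrow> real" where
  "en r G y f = (\<Sum>a \<in> supp_arcs G y. \<bar>f a\<bar> powr (r + 1) / (y a) powr r)"

lemma eff_en: "eff_resistance r G s t y = Inf {ereal (en r G y f) | f. is_st_flow G y s t f}"
  unfolding eff_resistance_def en_def by simp

lemma en_nonneg: "0 \<le> en r G y f"
  unfolding en_def by (intro sum_nonneg) auto

lemma key: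
  fixes r c :: real and G :: "('v,'e) pre_digraph"
  assumes r: "r \<ge> 1" and fin: "finite (arcs G)"
    and h1: "\<forall>a \<in> arcs G. y1 a \<ge> 0" and h2: "\<forall>a \<in> arcs G. y2 a \<ge> 0"
    and c: "0 < c" "c < 1"
    and F1: "is_st_flow G y1 s t f1" and F2: "is_st_flow G y2 s t f2"
  shows "eff_resistance r G s t (\<lambda>a. c * y1 a + (1 - c) * y2 a)
     \<le> ereal (c * en r G y1 f1 + (1-c) * en r G y2 f2)"
proof -
  define y where "y = (\<lambda>a. c * y1 a + (1 - c) * y2 a)"
  define S where "S = supp_arcs G y"
  define S1 where "S1 = supp_arcs G y1"
  define S2 where "S2 = supp_arcs G y2"
  have SU: "S = S1 \<union> S2"
    unfolding S_def S1_def S2_def supp_arcs_def y_def using h1 h2 pos_comb[OF _ _ c] by auto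
  have finS: "finite S" unfolding S_def supp_arcs_def using fin by simp
  have z1: "a \<notin> S1 \<Longrightarrow> f1 a = 0" for a using F1 unfolding is_st_flow_def S1_def by auto
  have z2: "a \<notin> S2 \<Longrightarrow> f2 a = 0" for a using F2 unfolding is_st_flow_def S2_def by auto
  define f where "f = (\<lambda>a. c * f1 a + (1-c) * f2 a)"
  have flow: "is_st_flow G y s t f"
    unfolding is_st_flow_def
  proof (intro conjI allI impI ballI)
    fix a assume "a \<notin> supp_arcs G y"
    then show "f a = 0" using z1 z2 SU unfolding S_def f_def by auto
  next
    fix v assume v: "v \<in> verts G"
    have red1: "(\<Sum>a\<in>S. incidence G v a * f1 a) = (\<Sum>a\<in>S1. incidence G v a * f1 a)"
      by (rule sum.mono_neutral_right) (use finS SU z1 in auto)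
    have red2: "(\<Sum>a\<in>S. incidence G v a * f2 a) = (\<Sum>a\<in>S2. incidence G v a * f2 a)"
      by (rule sum.mono_neutral_right) (use finS SU z2 in auto)
    have "(\<Sum>a\<in>S. incidence G v a * f a) = c * (\<Sum>a\<in>S. incidence G v a * f1 a) + (1-c) * (\<Sum>a\<in>S. incidence G v a * f2 a)"
    proof -
      have "(\<Sum>a\<in>S. incidence G v a * f a) = (\<Sum>a\<in>S. c * (incidence G v a * f1 a) + (1-c) * (incidence G v a * f2 a))"
        by (rule sum.cong) (simp_all add: f_def algebra_simps)
      then show ?thesis by (simp add: sum.distrib sum_distrib_left)
    qed
    also have "\<dots> = (if v = s then 1 else 0) - (if v = t then 1 else 0)"
    proof -
      have q1: "(\<Sum>a\<in>S1. incidence G v a * f1 a) = (if v = s then 1 else 0) - (if v = t then 1 else 0)"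
        using F1 v unfolding is_st_flow_def S1_def by blast
      have q2: "(\<Sum>a\<in>S2. incidence G v a * f2 a) = (if v = s then 1 else 0) - (if v = t then 1 else 0)"
        using F2 v unfolding is_st_flow_def S2_def by blast
      show ?thesis unfolding red1 red2 q1 q2 by (simp add: algebra_simps)
    qed
    finally show "(\<Sum>a\<in>supp_arcs G y. incidence G v a * f a) = (if v = s then 1 else 0) - (if v = t then 1 else 0)"
      unfolding S_def .
  qed
  have "eff_resistance r G s t y \<le> ereal (en r G y f)"
    unfolding eff_en using flow by (auto intro!: Inf_lower)
  also have "en r G y f \<le> (\<Sum>a\<in>S. c * (\<bar>f1 a\<bar> powr (r+1) / y1 a powr r) + (1-c) * (\<bar>f2 a\<bar> powr (r+1) / y2 a powr r))"
    unfolding en_def S_def[symmetric]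
  proof (rule sum_mono)
    fix a assume a: "a \<in> S"
    then have ar: "a \<in> arcs G" "y a > 0" unfolding S_def supp_arcs_def by auto
    show "\<bar>f a\<bar> powr (r + 1) / y a powr r \<le> c * (\<bar>f1 a\<bar> powr (r+1) / y1 a powr r) + (1-c) * (\<bar>f2 a\<bar> powr (r+1) / y2 a powr r)"
      unfolding f_def y_def
    proof (rule persp)
      show "r > 0" using r by simp
      show "0 \<le> y1 a" "0 \<le> y2 a" using h1 h2 ar by auto
      show "y1 a = 0 \<Longrightarrow> f1 a = 0" using z1 unfolding S1_def supp_arcs_def by auto
      show "y2 a = 0 \<Longrightarrow> f2 a = 0" using z2 unfolding S2_def supp_arcs_def by auto
      show "c * y1 a + (1-c) * y2 a > 0" using ar unfolding y_def by simp
    qed (use c in auto)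
  qed
  also have "\<dots> = c * (\<Sum>a\<in>S. \<bar>f1 a\<bar> powr (r+1) / y1 a powr r) + (1-c) * (\<Sum>a\<in>S. \<bar>f2 a\<bar> powr (r+1) / y2 a powr r)"
    by (simp add: sum.distrib sum_distrib_left)
  also have "(\<Sum>a\<in>S. \<bar>f1 a\<bar> powr (r+1) / y1 a powr r) = en r G y1 f1"
    unfolding en_def S1_def[symmetric] by (rule sum.mono_neutral_right) (use finS SU z1 in auto)
  also have "(\<Sum>a\<in>S. \<bar>f2 a\<bar> powr (r+1) / y2 a powr r) = en r G y2 f2"
    unfolding en_def S2_def[symmetric] by (rule sum.mono_neutral_right) (use finS SU z2 in auto)
  finally show ?thesis unfolding y_def by simp
qed

theorem lemma3:
  fixes r :: real and G :: "('v,'e) pre_digraph" and s t :: 'v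
  assumes "r \<ge> 1"
    and "fin_digraph G"
    and "connected G"
    and "s \<in> verts G" and "t \<in> verts G" and "s \<noteq> t"
  shows "\<forall>y1 y2 (c::real).
           (\<forall>a \<in> arcs G. y1 a \<ge> 0) \<longrightarrow> (\<forall>a \<in> arcs G. y2 a \<ge> 0) \<longrightarrow>
           0 \<le> c \<longrightarrow> c \<le> 1 \<longrightarrow>
           eff_resistance r G s t (\<lambda>a. c * y1 a + (1 - c) * y2 a)
             \<le> ereal c * eff_resistance r G s t y1 + ereal (1 - c) * eff_resistance r G s t y2"
proof (intro allI impI)
  fix y1 y2 :: "'e \<Rightarrow> real" and c :: real
  assume h1: "\<forall>a \<in> arcs G. y1 a \<ge> 0" and h2: "\<forall>a \<in> arcs G. y2 a \<ge> 0"
    and c0: "0 \<le> c" and c1: "c \<le> 1"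
  have fin: "finite (arcs G)" using assms(2) by (simp add: fin_digraph.finite_arcs)
  show "eff_resistance r G s t (\<lambda>a. c * y1 a + (1 - c) * y2 a)
             \<le> ereal c * eff_resistance r G s t y1 + ereal (1 - c) * eff_resistance r G s t y2"
  proof (cases "c = 0")
    case True
    then show ?thesis by (simp add: zero_ereal_def[symmetric] one_ereal_def[symmetric])
  next
    case False
    show ?thesis
    proof (cases "c = 1")
      case True
      then show ?thesis by (simp add: zero_ereal_def[symmetric] one_ereal_def[symmetric])
    next
      case False
      have c: "0 < c" "c < 1" using \<open>c \<noteq> 0\<close> False c0 c1 by auto
      show ?thesis unfolding eff_en[of r G s t y1] eff_en[of r G s t y2]
      proof (rule combo[OF c])
        show "\<forall>x. is_st_flow G y1 s t x \<longrightarrow> 0 \<le> en r G y1 x" by (simp add: en_nonneg)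
        show "\<forall>x. is_st_flow G y2 s t x \<longrightarrow> 0 \<le> en r G y2 x" by (simp add: en_nonneg)
        show "\<forall>x y. is_st_flow G y1 s t x \<longrightarrow> is_st_flow G y2 s t y \<longrightarrow>
          eff_resistance r G s t (\<lambda>a. c * y1 a + (1 - c) * y2 a) \<le> ereal (c * en r G y1 x + (1 - c) * en r G y2 y)"
          using key[OF assms(1) fin h1 h2 c] by blast
      qed
    qed
  qed
qed

end
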